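(* For every $d\ge3$, the functions $C_{-1}(u_1,\dots,u_d)=\phi_{-1}^{-1}(\phi_{-1}(u_1)+\cdots+\phi_{-1}(u_d))$ and $C_{-2}(u_1,\dots,u_d)=\phi_{-2}^{-1}(\phi_{-2}(u_1)+\cdots+\phi_{-2}(u_d))$, $u_1,\dots,u_d\in[0,1]$, are valid $d$-dimensional copulas.
   Context: $\phi_{-1}(x)=x-1-\log x$ and $\phi_{-2}(x)=\frac12(x^{-1}+x-2)$ for $x>0$, with $\phi_{-1}(0)=\phi_{-2}(0)=\infty$; each is a strictly decreasing bijection from $[0,1]$ onto $[0,\infty]$, and $\phi_\lambda^{-1}$ denotes its inverse (with $\phi_\lambda^{-1}(\infty)=0$). Explicitly, $\phi_{-1}^{-1}(t)=-\mathfrak{W}_0(-e^{-(t+1)})$ with $\mathfrak{W}_0$ the principal branch of the Lambert W function, and $\phi_{-2}^{-1}(t)=t+1-\sqrt{(t+1)^2-1}$. A $d$-dimensional copula is a joint CDF on $[0,1]^d$ with uniform $[0,1]$ margins. *)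

theory Defs
  imports "HOL-Probability.Probability"
begin

definition phi_m1 :: "real \<Rightarrow> ereal" where
  "phi_m1 x = (if x = 0 then \<infinity> else ereal (x - 1 - ln x))"

definition phi_m2 :: "real \<Rightarrow> ereal" where
  "phi_m2 x = (if x = 0 then \<infinity> else ereal ((inverse x + x - 2) / 2))"

definition gen_inv :: "(real \<Rightarrow> ereal) \<Rightarrow> ereal \<Rightarrow> real" where
  "gen_inv phi t = (THE x. x \<in> {0..1} \<and> phi x = t)"

definition arch_C :: "(real \<Rightarrow> ereal) \<Rightarrow> real^'n \<Rightarrow> real" where
  "arch_C phi u = gen_inv phi (\<Sum>i\<in>UNIV. phi (u $ i))"

text \<open>A d-dimensional copula (d = CARD('n)): the restriction to [0,1]^d of the joint
  CDF of a Borel probability measure on [0,1]^d whose one-dimensional margins are uniform.\<close>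

definition is_copula :: "(real^'n \<Rightarrow> real) \<Rightarrow> bool" where
  "is_copula C \<longleftrightarrow>
     (\<exists>M :: (real^'n) measure.
        prob_space M \<and> sets M = sets borel \<and>
        measure M {x. \<forall>i. 0 \<le> x $ i \<and> x $ i \<le> 1} = 1 \<and>
        (\<forall>i t. 0 \<le> t \<and> t \<le> 1 \<longrightarrow> measure M {x. x $ i \<le> t} = t) \<and>
        (\<forall>u. (\<forall>i. 0 \<le> u $ i \<and> u $ i \<le> 1) \<longrightarrow>
              C u = measure M {x. \<forall>i. x $ i \<le> u $ i}))"

end

theory Submission
  imports Defs "HOL-Complex_Analysis.Complex_Analysis"
begin

no_notation fps_nth (infixl \<open>$\<close> 75)


lemma vec_lambda_measurable:
  fixes g :: "'n::finite \<Rightarrow> 'a \<Rightarrow> real"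
  assumes [measurable]: "\<And>i. g i \<in> borel_measurable N"
  shows "(\<lambda>x. (\<chi> i. g i x) :: real^'n) \<in> borel_measurable N"
proof -
  have "(\<lambda>x. (\<chi> i. g i x) :: real^'n) = (\<lambda>x. \<Sum>i\<in>UNIV. g i x *\<^sub>R axis i 1)"
    by (auto simp: vec_eq_iff axis_def if_distrib cong: if_cong)
  also have "\<dots> \<in> borel_measurable N" by measurable
  finally show ?thesis .
qed

lemma gen_inv_eq:
  assumes "inj_on phi {0..1}" "x \<in> {0..1}" "phi x = t"
  shows "gen_inv phi t = x"
  unfolding gen_inv_def
  by (rule the_equality) (use assms in \<open>auto simp: inj_on_def\<close>)

lemma copula_frailty:
  fixes phi :: "real \<Rightarrow> ereal" and psi :: "real \<Rightarrow> real" and \<Omega> :: "'w measure"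
    and V :: "'w \<Rightarrow> real"
  assumes phi0: "phi 0 = \<infinity>" and phi1: "phi 1 = 0"
  and phi_fin: "\<And>u. 0 < u \<Longrightarrow> u \<le> 1 \<Longrightarrow> 0 \<le> phi u \<and> phi u \<noteq> \<infinity>"
  and phi_mono: "\<And>u v. 0 \<le> u \<Longrightarrow> u < v \<Longrightarrow> v \<le> 1 \<Longrightarrow> phi v < phi u"
  and psi_range: "\<And>s. 0 \<le> s \<Longrightarrow> 0 < psi s \<and> psi s \<le> 1"
  and psi_inv: "\<And>s. 0 \<le> s \<Longrightarrow> phi (psi s) = ereal s"
  and \<Omega>: "prob_space \<Omega>" and V[measurable]: "V \<in> borel_measurable \<Omega>"
  and Vpos: "AE \<omega> in \<Omega>. V \<omega> > 0"
  and lap: "\<And>s. 0 \<le> s \<Longrightarrow> (\<integral>\<^sup>+\<omega>. ennreal (exp (- s * V \<omega>)) \<partial>\<Omega>) = ennreal (psi s)"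
  shows "is_copula (arch_C phi :: real^'n::finite \<Rightarrow> real)"
proof -
  have inj: "inj_on phi {0..1}"
  proof (rule inj_onI)
    fix x y assume "x \<in> {0..1}" "y \<in> {0..1}" "phi x = phi y"
    then show "x = y" using phi_mono[of x y] phi_mono[of y x]
      by (cases x y rule: linorder_cases) auto
  qed
  have gi_fin: "gen_inv phi (ereal s) = psi s" if "0 \<le> s" for s
    using gen_inv_eq[OF inj, of "psi s"] psi_range[OF that] psi_inv[OF that] by auto
  have gi_inf: "gen_inv phi \<infinity> = 0"
    using gen_inv_eq[OF inj, of 0] phi0 by auto
  have gi_phi: "gen_inv phi (phi u) = u" if "0 \<le> u" "u \<le> 1" for u
    using gen_inv_eq[OF inj, of u] that by auto
  have galois: "psi s \<le> u \<longleftrightarrow> phi u \<le> ereal s" if "0 \<le> s" "0 \<le> u" "u \<le> 1" for s u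
  proof
    assume "psi s \<le> u"
    then show "phi u \<le> ereal s"
      using phi_mono[of "psi s" u] psi_range[OF that(1)] psi_inv[OF that(1)] that
      by (cases "psi s = u") auto
  next
    assume "phi u \<le> ereal s"
    then show "psi s \<le> u"
      using phi_mono[of u "psi s"] psi_range[OF that(1)] psi_inv[OF that(1)] that
      by force
  qed
  define psi' where "psi' s = psi (max 0 s)" for s
  have psi'_anti: "psi' t \<le> psi' s" if "s \<le> t" for s t
  proof -
    have a: "phi (psi' s) = ereal (max 0 s)" unfolding psi'_def by (rule psi_inv) simp
    have b: "max 0 s \<le> max 0 t" using that by simp
    have "phi (psi' s) \<le> ereal (max 0 t)"
      using a b by (metis ereal_less_eq(3))
    then show ?thesis
      unfolding psi'_def using galois[of "max 0 t" "psi (max 0 s)"] psi_range[of "max 0 s"]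
      by auto
  qed
  have psi'_range: "0 < psi' s \<and> psi' s \<le> 1" for s
    unfolding psi'_def using psi_range[of "max 0 s"] by auto
  have [measurable]: "psi' \<in> borel_measurable borel"
  proof -
    have "mono (\<lambda>s. - psi' s)" by (auto simp: mono_def psi'_anti)
    then have "(\<lambda>s. - psi' s) \<in> borel_measurable borel" by (rule borel_measurable_mono)
    then have "(\<lambda>s. - (- psi' s)) \<in> borel_measurable borel" by measurable
    then show ?thesis by simp
  qed
  define E where "E v u = (if u = 0 then 0 else exp (- v * real_of_ereal (phi u)))" for v u :: real
  have E_range: "0 \<le> E v u \<and> E v u \<le> 1" if "0 < v" "0 \<le> u" "u \<le> 1" for v u
  proof (cases "u = 0")
    case False
    then have "0 \<le> real_of_ereal (phi u)" using phi_fin[of u] that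
      by (simp add: real_of_ereal_pos)
    then show ?thesis using False that by (auto simp: E_def mult_nonneg_nonneg)
  qed (auto simp: E_def)
  have key: "psi' (- ln w / v) \<le> u \<longleftrightarrow> w \<le> E v u"
    if kv: "0 < v" "0 < w" "w \<le> 1" "0 \<le> u" "u \<le> 1" for v w u
  proof -
    have "ln w \<le> 0" using kv by simp
    then have s0: "0 \<le> - ln w / v" using kv by (simp add: divide_nonpos_pos)
    then have "psi' (- ln w / v) = psi (- ln w / v)" by (simp add: psi'_def)
    then have 1: "psi' (- ln w / v) \<le> u \<longleftrightarrow> phi u \<le> ereal (- ln w / v)"
      using galois[OF s0 kv(4,5)] by simp
    show ?thesis
    proof (cases "u = 0")
      case True
      then show ?thesis using 1 phi0 kv by (simp add: E_def)
    next
      case False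
      then have "0 < u" using kv by simp
      then obtain r where r: "phi u = ereal r" using phi_fin[of u] kv
        by (cases "phi u") auto
      have "phi u \<le> ereal (- ln w / v) \<longleftrightarrow> r \<le> - ln w / v" using r by simp
      also have "\<dots> \<longleftrightarrow> v * r \<le> - ln w" using kv by (simp add: field_simps)
      also have "\<dots> \<longleftrightarrow> ln w \<le> - v * r" by auto
      also have "\<dots> \<longleftrightarrow> w \<le> exp (- v * r)" using kv
        by (metis exp_le_cancel_iff exp_ln)
      finally show ?thesis using 1 False r by (simp add: E_def)
    qed
  qed
  define U where "U = uniform_measure lborel {0<..1::real}"
  define W where "W = Pi\<^sub>M (UNIV::'n set) (\<lambda>_. U)"
  have probU: "prob_space U" unfolding U_def by (rule prob_space_uniform_measure) auto
  have probW: "prob_space W" unfolding W_def by (rule prob_space_PiM) (use probU in auto)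
  have probP: "prob_space (\<Omega> \<Otimes>\<^sub>M W)" by (rule prob_space_pair[OF \<Omega> probW])
  interpret PS: product_sigma_finite "\<lambda>_::'n. U"
    unfolding product_sigma_finite_def using probU prob_space_imp_sigma_finite by blast
  interpret SO: sigma_finite_measure \<Omega> using \<Omega> prob_space_imp_sigma_finite by blast
  interpret PW: prob_space W by (rule probW)
  have spaceU: "space U = UNIV" by (simp add: U_def)
  have setsU: "sets U = sets borel" by (simp add: U_def)
  have spaceW: "space W = UNIV" by (simp add: W_def space_PiM PiE_UNIV_domain spaceU)
  have emU: "emeasure U {0<..e} = ennreal e" if "0 \<le> e" "e \<le> 1" for e
  proof -
    have "emeasure U {0<..e} = emeasure lborel ({0<..1} \<inter> {0<..e}) / emeasure lborel {0<..1::real}"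
      unfolding U_def by (rule emeasure_uniform_measure) auto
    also have "{0<..1} \<inter> {0<..e} = {0<..e}" using that by auto
    finally show ?thesis using that by (simp add: divide_ennreal_def)
  qed
  have coord_meas [measurable]: "(\<lambda>w. w i) \<in> borel_measurable W" for i :: 'n
  proof -
    have "(\<lambda>w. w i) \<in> W \<rightarrow>\<^sub>M U" unfolding W_def by (rule measurable_component_singleton) simp
    then show ?thesis by (simp add: measurable_cong_sets[OF refl setsU])
  qed
  define X where "X = (\<lambda>p::'w \<times> ('n \<Rightarrow> real). (\<chi> i. psi' (- ln (snd p i) / V (fst p))) :: real^'n)"
  have Xmeas: "X \<in> borel_measurable (\<Omega> \<Otimes>\<^sub>M W)" unfolding X_def
    by (rule vec_lambda_measurable) measurable
  define M where "M = distr (\<Omega> \<Otimes>\<^sub>M W) borel X"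
  have probM: "prob_space M" unfolding M_def by (rule prob_space.prob_space_distr[OF probP Xmeas])
  have setsM: "sets M = sets borel" by (simp add: M_def)
  have slice: "emeasure W {w. \<forall>i. psi' (- ln (w i) / v) \<le> u $ i} = ennreal (\<Prod>i\<in>UNIV. E v (u $ i))"
    if v: "0 < v" and u: "\<And>i. 0 \<le> u$i \<and> u$i \<le> 1" for v u
  proof -
    define B where "B = Pi UNIV (\<lambda>_::'n. {0<..1::real})"
    have B_eq: "B = PiE UNIV (\<lambda>_. {0<..1})" by (simp add: B_def PiE_UNIV_domain)
    have "emeasure W B = (\<Prod>i\<in>(UNIV::'n set). emeasure U {0<..1})" unfolding B_eq W_def
      using PS.emeasure_PiM[of UNIV "\<lambda>_. {0<..1}"] by (simp add: setsU)
    then have "emeasure W B = 1" using emU[of 1] by simp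
    then have "PW.prob B = 1" by (simp add: measure_def)
    then have AEB: "AE w in W. w \<in> B" by (rule PW.AE_prob_1)
    define S where "S = PiE UNIV (\<lambda>i. {0<..E v (u$i)})"
    have "emeasure W {w. \<forall>i. psi' (- ln (w i) / v) \<le> u $ i} = emeasure W S"
    proof (rule emeasure_eq_AE)
      show "AE w in W. (w \<in> {w. \<forall>i. psi' (- ln (w i) / v) \<le> u $ i}) = (w \<in> S)"
        using AEB
      proof (rule eventually_mono)
        fix w assume "w \<in> B"
        then have w: "0 < w i \<and> w i \<le> 1" for i by (auto simp: B_def)
        show "(w \<in> {w. \<forall>i. psi' (- ln (w i) / v) \<le> u $ i}) = (w \<in> S)"
          using key[OF v, of "w _" "u $ _"] w u by (auto simp: S_def PiE_UNIV_domain)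
      qed
      have "{w. \<forall>i. psi' (- ln (w i) / v) \<le> u $ i} = {w\<in>space W. \<forall>i. psi' (- ln (w i) / v) \<le> u $ i}"
        by (simp add: spaceW)
      also have "\<dots> \<in> sets W" by measurable
      finally show "{w. \<forall>i. psi' (- ln (w i) / v) \<le> u $ i} \<in> sets W" .
      show "S \<in> sets W" unfolding S_def W_def by (rule sets_PiM_I_finite) (auto simp: setsU)
    qed
    also have "emeasure W S = (\<Prod>i\<in>UNIV. emeasure U {0<..E v (u$i)})" unfolding S_def W_def
      using PS.emeasure_PiM[of UNIV "\<lambda>i. {0<..E v (u$i)}"] by (simp add: setsU)
    also have "\<dots> = (\<Prod>i\<in>UNIV. ennreal (E v (u$i)))"
      using emU E_range[OF v] u by simp
    also have "\<dots> = ennreal (\<Prod>i\<in>UNIV. E v (u$i))"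
      using E_range[OF v] u by (simp add: prod_ennreal)
    finally show ?thesis .
  qed
  have box: "emeasure M {x. \<forall>i. x$i \<le> u$i} = ennreal (gen_inv phi (\<Sum>i\<in>UNIV. phi (u$i)))
          \<and> 0 \<le> gen_inv phi (\<Sum>i\<in>UNIV. phi (u$i))"
    if u: "\<And>i. 0 \<le> u$i \<and> u$i \<le> 1" for u :: "real^'n"
  proof -
    let ?A = "{x::real^'n. \<forall>i. x$i \<le> u$i}"
    have Asets: "?A \<in> sets borel"
    proof -
      have "?A = {x\<in>space borel. \<forall>i. x$i \<le> u$i}" by simp
      also have "\<dots> \<in> sets borel" by measurable
      finally show ?thesis .
    qed
    have "emeasure M ?A = emeasure (\<Omega> \<Otimes>\<^sub>M W) (X -` ?A \<inter> space (\<Omega> \<Otimes>\<^sub>M W))"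
      unfolding M_def by (rule emeasure_distr[OF Xmeas Asets])
    also have "\<dots> = (\<integral>\<^sup>+\<omega>. emeasure W (Pair \<omega> -` (X -` ?A \<inter> space (\<Omega> \<Otimes>\<^sub>M W))) \<partial>\<Omega>)"
      by (rule PW.emeasure_pair_measure_alt) (use measurable_sets[OF Xmeas Asets] in simp)
    also have "\<dots> = (\<integral>\<^sup>+\<omega>. ennreal (\<Prod>i\<in>UNIV. E (V \<omega>) (u $ i)) \<partial>\<Omega>)"
    proof (rule nn_integral_cong_AE)
      show "AE \<omega> in \<Omega>. emeasure W (Pair \<omega> -` (X -` ?A \<inter> space (\<Omega> \<Otimes>\<^sub>M W))) =
               ennreal (\<Prod>i\<in>UNIV. E (V \<omega>) (u $ i))"
        using Vpos AE_space[of \<Omega>]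
      proof (eventually_elim)
        case (elim \<omega>)
        have "Pair \<omega> -` (X -` ?A \<inter> space (\<Omega> \<Otimes>\<^sub>M W)) = {w. \<forall>i. psi' (- ln (w i) / V \<omega>) \<le> u $ i}"
          using elim by (auto simp: X_def space_pair_measure spaceW)
        then show ?case using slice[OF elim(1) u] by simp
      qed
    qed
    finally have em: "emeasure M ?A = (\<integral>\<^sup>+\<omega>. ennreal (\<Prod>i\<in>UNIV. E (V \<omega>) (u $ i)) \<partial>\<Omega>)" .
    show ?thesis
    proof (cases "\<exists>i. u$i = 0")
      case True
      then obtain i0 where i0: "u$i0 = 0" by auto
      have z: "(\<Prod>i\<in>UNIV. E v (u $ i)) = 0" for v
        using i0 by (intro prod_zero) (auto simp: E_def)
      have "emeasure M ?A = (\<integral>\<^sup>+\<omega>. 0 \<partial>\<Omega>)" using em z by (simp only: ennreal_0)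
      then have "emeasure M ?A = 0" by simp
      moreover have "(\<Sum>i\<in>UNIV. phi (u$i)) = \<infinity>"
        using i0 phi0 by (subst sum_Pinfty) (auto intro!: exI[of _ i0])
      ultimately show ?thesis using gi_inf by simp
    next
      case False
      then have pos: "0 < u$i" for i using u[of i] by (metis less_eq_real_def)
      define r where "r i = real_of_ereal (phi (u$i))" for i
      have r: "phi (u$i) = ereal (r i) \<and> 0 \<le> r i" for i
        using phi_fin[OF pos[of i]] u[of i] unfolding r_def
        by (cases "phi (u$i)") auto
      have sumphi: "(\<Sum>i\<in>UNIV. phi (u$i)) = ereal (\<Sum>i\<in>UNIV. r i)"
        using r by simp
      have sr: "0 \<le> (\<Sum>i\<in>UNIV. r i)" using r by (simp add: sum_nonneg)
      have "(\<Prod>i\<in>UNIV. E v (u $ i)) = exp (- (\<Sum>i\<in>UNIV. r i) * v)" for v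
      proof -
        have "(\<Prod>i\<in>UNIV. E v (u $ i)) = (\<Prod>i\<in>UNIV. exp (- v * r i))"
          using pos unfolding E_def r_def[symmetric] by (intro prod.cong) (auto simp: less_le)
        also have "\<dots> = exp (\<Sum>i\<in>UNIV. - v * r i)" by (simp add: exp_sum)
        also have "(\<Sum>i\<in>UNIV. - v * r i) = - (\<Sum>i\<in>UNIV. r i) * v"
          by (simp add: sum_distrib_left sum_negf mult.commute)
        finally show ?thesis .
      qed
      then have "emeasure M ?A = ennreal (psi (\<Sum>i\<in>UNIV. r i))"
        using em lap[OF sr] by simp
      then show ?thesis using sumphi gi_fin[OF sr] psi_range[OF sr] by simp
    qed
  qed
  have Xrange: "0 < X p $ i \<and> X p $ i \<le> 1" for p i using psi'_range by (simp add: X_def)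
  have preim: "emeasure M A = emeasure (\<Omega> \<Otimes>\<^sub>M W) (X -` A \<inter> space (\<Omega> \<Otimes>\<^sub>M W))"
    if "A \<in> sets borel" for A
    unfolding M_def by (rule emeasure_distr[OF Xmeas that])
  show ?thesis
    unfolding is_copula_def
  proof (intro exI[of _ M] conjI allI impI)
    show "prob_space M" by (rule probM)
    show "sets M = sets borel" by (rule setsM)
    show "measure M {x. \<forall>i. 0 \<le> x$i \<and> x$i \<le> 1} = 1"
    proof -
      have S: "{x::real^'n. \<forall>i. 0 \<le> x$i \<and> x$i \<le> 1} \<in> sets borel"
      proof -
        have "{x::real^'n. \<forall>i. 0 \<le> x$i \<and> x$i \<le> 1} = {x\<in>space borel. \<forall>i. 0 \<le> x$i \<and> x$i \<le> 1}" by simp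
        also have "\<dots> \<in> sets borel" by measurable
        finally show ?thesis .
      qed
      have "X -` {x. \<forall>i. 0 \<le> x$i \<and> x$i \<le> 1} \<inter> space (\<Omega> \<Otimes>\<^sub>M W) = space (\<Omega> \<Otimes>\<^sub>M W)"
        using Xrange by (auto simp: less_imp_le)
      then have "emeasure M {x. \<forall>i. 0 \<le> x$i \<and> x$i \<le> 1} = 1"
        using preim[OF S] prob_space.emeasure_space_1[OF probP] by simp
      then show ?thesis by (simp add: measure_def)
    qed
  next
    fix i :: 'n and t :: real assume t: "0 \<le> t \<and> t \<le> 1"
    define u :: "real^'n" where "u = (\<chi> j. if j = i then t else 1)"
    have uok: "0 \<le> u$j \<and> u$j \<le> 1" for j using t by (simp add: u_def)
    have S1: "{x::real^'n. x$i \<le> t} \<in> sets borel"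
    proof -
      have "{x::real^'n. x$i \<le> t} = {x\<in>space borel. x$i \<le> t}" by simp
      also have "\<dots> \<in> sets borel" by measurable
      finally show ?thesis .
    qed
    have S2: "{x::real^'n. \<forall>j. x$j \<le> u$j} \<in> sets borel"
    proof -
      have "{x::real^'n. \<forall>j. x$j \<le> u$j} = {x\<in>space borel. \<forall>j. x$j \<le> u$j}" by simp
      also have "\<dots> \<in> sets borel" by measurable
      finally show ?thesis .
    qed
    have "X -` {x. x$i \<le> t} \<inter> space (\<Omega> \<Otimes>\<^sub>M W) = X -` {x. \<forall>j. x$j \<le> u$j} \<inter> space (\<Omega> \<Otimes>\<^sub>M W)"
      using Xrange by (auto simp: u_def)
    then have "emeasure M {x. x$i \<le> t} = emeasure M {x. \<forall>j. x$j \<le> u$j}"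
      using preim[OF S1] preim[OF S2] by simp
    also have "\<dots> = ennreal (gen_inv phi (\<Sum>j\<in>UNIV. phi (u$j)))" using box[OF uok] by simp
    also have "(\<Sum>j\<in>UNIV. phi (u$j)) = (\<Sum>j\<in>UNIV. if j = i then phi t else 0)"
      using phi1 by (intro sum.cong) (auto simp: u_def)
    also have "\<dots> = phi t" by simp
    finally show "measure M {x. x$i \<le> t} = t" using gi_phi[of t] t by (simp add: measure_def)
  next
    fix u :: "real^'n" assume "\<forall>i. 0 \<le> u$i \<and> u$i \<le> 1"
    then show "arch_C phi u = measure M {x. \<forall>i. x$i \<le> u$i}"
      using box[of u] by (simp add: arch_C_def measure_def)
  qed
qed



lemma series_boundary:
  fixes c :: "nat \<Rightarrow> real" and h g :: "real \<Rightarrow> real"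
  assumes c: "\<And>n. 0 \<le> c n"
  and h: "\<And>t. 0 < t \<Longrightarrow> t < 1 \<Longrightarrow> 0 \<le> h t \<and> h t \<le> 1"
  and hlim: "(h \<longlongrightarrow> 1) (at_left 1)"
  and sm: "\<And>t. 0 < t \<Longrightarrow> t < 1 \<Longrightarrow> (\<lambda>n. c n * h t ^ n) sums g t"
  and glim: "(g \<longlongrightarrow> L) (at_left 1)"
  shows "c sums L"
proof -
  have ev: "eventually (\<lambda>t. t \<in> {0<..<1}) (at_left (1::real))"
    by (rule eventually_at_left_real) simp
  have part: "(\<Sum>n<N. c n) \<le> L" for N
  proof -
    have "((\<lambda>t. \<Sum>n<N. c n * h t ^ n) \<longlongrightarrow> (\<Sum>n<N. c n * 1 ^ n)) (at_left 1)"
      by (intro tendsto_intros hlim)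
    moreover have "eventually (\<lambda>t. (\<Sum>n<N. c n * h t ^ n) \<le> g t) (at_left 1)"
      using ev
    proof eventually_elim
      case (elim t)
      then have "(\<Sum>n<N. c n * h t ^ n) \<le> suminf (\<lambda>n. c n * h t ^ n)"
        using sm[of t] h[of t] c by (intro sum_le_suminf) (auto simp: sums_iff)
      then show ?case using sm[of t] elim by (simp add: sums_iff)
    qed
    ultimately show ?thesis using tendsto_le[OF trivial_limit_at_left_real glim] by simp
  qed
  have summ: "summable c" by (rule summableI_nonneg_bounded[OF c part])
  have le1: "suminf c \<le> L" by (rule suminf_le_const[OF summ part])
  have "eventually (\<lambda>t. g t \<le> suminf c) (at_left 1)"
    using ev
  proof eventually_elim
    case (elim t)
    have "suminf (\<lambda>n. c n * h t ^ n) \<le> suminf c"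
      using sm[of t] h[of t] c elim summ
      by (intro suminf_le) (auto simp: sums_iff intro!: mult_right_le_one_le power_le_one)
    then show ?case using sm[of t] elim by (simp add: sums_iff)
  qed
  then have le2: "L \<le> suminf c"
    using tendsto_le[OF trivial_limit_at_left_real tendsto_const glim] by simp
  show ?thesis using le1 le2 summ by (simp add: sums_iff)
qed

definition psi2 :: "real \<Rightarrow> real" where
  "psi2 s = (s + 1) - sqrt ((s + 1)^2 - 1)"

definition cb :: "nat \<Rightarrow> real" where
  "cb n = (if n = 0 then 0 else - ((1/2::real) gchoose n) * (-1)^n)"

lemma half_prod_sign: "0 \<le> (-1)^k * (\<Prod>i=0..<Suc k. (1/2::real) - real i)"
proof (induction k)
  case 0
  then show ?case by simp
next
  case (Suc k)
  define P where "P = (\<Prod>i=0..<Suc k. (1/2::real) - real i)"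
  have e: "(\<Prod>i=0..<Suc (Suc k). (1/2::real) - real i) = P * (1/2 - real (Suc k))"
    unfolding P_def by (rule prod.atLeast0_lessThan_Suc)
  have eq: "(-1::real)^Suc k * (\<Prod>i=0..<Suc (Suc k). 1/2 - real i)
      = ((-1)^k * P) * (real (Suc k) - 1/2)"
    unfolding e by (simp add: power_Suc algebra_simps)
  note Suc = Suc[folded P_def]
  have "0 \<le> ((-1)^k * P) * (real (Suc k) - 1/2)" using Suc by (rule mult_nonneg_nonneg) simp
  then show ?case using eq by simp
qed

lemma cb_nonneg: "0 \<le> cb n"
proof (cases n)
  case 0
  then show ?thesis by (simp add: cb_def)
next
  case (Suc k)
  have "((1/2::real) gchoose Suc k) * fact (Suc k) = (\<Prod>i=0..<Suc k. 1/2 - real i)"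
    by (rule gbinomial_mult_fact')
  then have "((1/2::real) gchoose Suc k) = (\<Prod>i=0..<Suc k. 1/2 - real i) / fact (Suc k)"
    by (simp add: eq_divide_eq)
  then have "cb n = ((-1)^k * (\<Prod>i=0..<Suc k. (1/2::real) - real i)) / fact (Suc k)"
    using Suc by (simp add: cb_def)
  then show ?thesis using half_prod_sign[of k] by simp
qed

lemma cb_sums_lt: "0 \<le> y \<Longrightarrow> y < 1 \<Longrightarrow> (\<lambda>n. cb n * y^n) sums (1 - sqrt (1 - y))"
proof -
  assume y: "0 \<le> y" "y < 1"
  have "(\<lambda>n. ((1/2::real) gchoose n) * (-y)^n) sums (1 + -y) powr (1/2)"
    by (rule gen_binomial_real) (use y in auto)
  then have "(\<lambda>n. ((1/2::real) gchoose n) * (-y)^n) sums sqrt (1 - y)"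
    using y by (simp add: powr_half_sqrt)
  then have a: "(\<lambda>n. - (((1/2::real) gchoose n) * (-y)^n)) sums (- sqrt (1 - y))"
    by (rule sums_minus)
  have b: "(\<lambda>n. if n = 0 then 1 else 0) sums (1::real)"
    using sums_single[of 0 "\<lambda>_. 1::real"] by simp
  have "(\<lambda>n. - (((1/2::real) gchoose n) * (-y)^n) + (if n = 0 then 1 else 0)) sums (- sqrt (1 - y) + 1)"
    by (rule sums_add[OF a b])
  moreover have "(\<lambda>n. - (((1/2::real) gchoose n) * (-y)^n) + (if n = 0 then 1 else 0)) = (\<lambda>n. cb n * y^n)"
  proof
    fix n
    have "(-y)^n = (-1)^n * y^n" by (rule power_minus)
    then show "- (((1/2::real) gchoose n) * (-y)^n) + (if n = 0 then 1 else 0) = cb n * y^n"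
      by (cases "n = 0") (simp_all add: cb_def)
  qed
  ultimately show ?thesis by simp
qed

lemma cb_sums_1: "cb sums 1"
proof -
  have "(\<lambda>n. cb n) sums (1 - sqrt (1 - 1))"
  proof (rule series_boundary[where h = "\<lambda>t. t" and g = "\<lambda>t. 1 - sqrt (1 - t)"])
    show "(\<lambda>n. cb n * t ^ n) sums (1 - sqrt (1 - t))" if "0 < t" "t < 1" for t
      using cb_sums_lt[of t] that by simp
    show "((\<lambda>t. 1 - sqrt (1 - t)) \<longlongrightarrow> 1 - sqrt (1 - 1)) (at_left (1::real))"
      by (intro tendsto_intros)
  qed (auto simp: cb_nonneg intro: tendsto_ident_at)
  then show ?thesis by simp
qed

lemma cb_sums: "0 \<le> y \<Longrightarrow> y \<le> 1 \<Longrightarrow> (\<lambda>n. cb n * y^n) sums (1 - sqrt (1 - y))"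
  using cb_sums_lt[of y] cb_sums_1 by (cases "y = 1") auto

lemma psi2_series:
  assumes s: "0 \<le> s"
  shows "(\<lambda>k. cb (Suc k) * (1 / (s + 1)) ^ (2 * k + 1)) sums psi2 s"
proof -
  define \<sigma> where "\<sigma> = s + 1"
  have \<sigma>: "1 \<le> \<sigma>" using s by (simp add: \<sigma>_def)
  define y where "y = 1 / \<sigma>^2"
  have y: "0 \<le> y" "y \<le> 1" using \<sigma> by (auto simp: y_def)
  have "(\<lambda>n. cb n * y^n) sums (1 - sqrt (1 - y))" by (rule cb_sums[OF y])
  then have "(\<lambda>k. cb (Suc k) * y^(Suc k)) sums (1 - sqrt (1 - y))"
    by (subst sums_Suc_iff) (simp add: cb_def)
  then have "(\<lambda>k. cb (Suc k) * y^(Suc k) * \<sigma>) sums ((1 - sqrt (1 - y)) * \<sigma>)"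
    by (rule sums_mult2)
  moreover have "cb (Suc k) * y^(Suc k) * \<sigma> = cb (Suc k) * (1 / (s + 1)) ^ (2 * k + 1)" for k
  proof -
    define z where "z = 1 / \<sigma>"
    have z\<sigma>: "z * \<sigma> = 1" using \<sigma> by (simp add: z_def)
    have "y = z^2" by (simp add: y_def z_def power_divide)
    then have "y^(Suc k) = (z^2)^(Suc k)" by simp
    also have "\<dots> = z^(2 * Suc k)" by (rule power_mult[symmetric])
    also have "2 * Suc k = Suc (2*k+1)" by simp
    finally have "y^(Suc k) = z^(Suc (2*k+1))" .
    then have "y^(Suc k) * \<sigma> = z^(2*k+1) * (z * \<sigma>)" by (simp only: power_Suc ac_simps)
    then have h: "y^(Suc k) * \<sigma> = z^(2*k+1)" using z\<sigma> by simp
    have "cb (Suc k) * y^(Suc k) * \<sigma> = cb (Suc k) * z^(2*k+1)" using h by (simp only: mult.assoc)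
    then show ?thesis by (simp only: z_def \<sigma>_def)
  qed
  moreover have "(1 - sqrt (1 - y)) * \<sigma> = psi2 s"
  proof -
    have "sqrt (1 - y) * \<sigma> = sqrt ((1 - y) * \<sigma>^2)"
      using \<sigma> by (simp add: real_sqrt_mult)
    also have "(1 - y) * \<sigma>^2 = \<sigma>^2 - 1" using \<sigma> by (simp add: y_def field_simps)
    finally have h: "sqrt (1 - y) * \<sigma> = sqrt (\<sigma>^2 - 1)" .
    have p: "psi2 s = \<sigma> - sqrt (\<sigma>^2 - 1)" by (simp add: psi2_def \<sigma>_def)
    have "(1 - sqrt (1 - y)) * \<sigma> = \<sigma> - sqrt (1 - y) * \<sigma>" by (simp add: algebra_simps)
    then show ?thesis using h p by simp
  qed
  ultimately show ?thesis by simp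
qed



lemma phi_m2_props:
  shows "phi_m2 0 = \<infinity>" "phi_m2 1 = 0"
    "\<And>u. 0 < u \<Longrightarrow> u \<le> 1 \<Longrightarrow> 0 \<le> phi_m2 u \<and> phi_m2 u \<noteq> \<infinity>"
    "\<And>u v. 0 \<le> u \<Longrightarrow> u < v \<Longrightarrow> v \<le> 1 \<Longrightarrow> phi_m2 v < phi_m2 u"
proof -
  show "phi_m2 0 = \<infinity>" "phi_m2 1 = 0" by (simp_all add: phi_m2_def)
  show "0 \<le> phi_m2 u \<and> phi_m2 u \<noteq> \<infinity>" if "0 < u" "u \<le> 1" for u
  proof -
    have "inverse u + u - 2 = (1 - u)^2 / u" using that by (simp add: field_simps power2_eq_square)
    then have "0 \<le> inverse u + u - 2" using that by simp
    then show ?thesis using that by (simp add: phi_m2_def)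
  qed
  show "phi_m2 v < phi_m2 u" if "0 \<le> u" "u < v" "v \<le> 1" for u v
  proof (cases "u = 0")
    case True
    then show ?thesis using that by (simp add: phi_m2_def)
  next
    case False
    then have u: "0 < u" using that by simp
    have "(inverse u + u) - (inverse v + v) = (v - u) * (1 - u * v) / (u * v)"
      using u that by (simp add: field_simps)
    moreover have "u * v < 1"
    proof -
      have "u * v \<le> u * 1" using u that by (intro mult_left_mono) auto
      then show ?thesis using that by simp
    qed
    ultimately have "0 < (inverse u + u) - (inverse v + v)" using u that by simp
    then show ?thesis using u that by (simp add: phi_m2_def)
  qed
qed

lemma psi2_props:
  assumes s: "0 \<le> s"
  shows "0 < psi2 s \<and> psi2 s \<le> 1" "phi_m2 (psi2 s) = ereal s"
proof -
  define \<sigma> where "\<sigma> = s + 1"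
  have \<sigma>: "1 \<le> \<sigma>" using s by (simp add: \<sigma>_def)
  define r where "r = sqrt (\<sigma>^2 - 1)"
  have r0: "0 \<le> r" using \<sigma> by (simp add: r_def)
  have r2: "r^2 = \<sigma>^2 - 1" using \<sigma> by (simp add: r_def)
  have p: "psi2 s = \<sigma> - r" by (simp add: psi2_def \<sigma>_def r_def)
  have "r < \<sigma>" using r2 r0 \<sigma> by (smt (verit) power_mono)
  moreover have "\<sigma> - 1 \<le> r"
  proof -
    have "(\<sigma> - 1)^2 \<le> r^2" using r2 \<sigma> by (simp add: power2_eq_square algebra_simps)
    then show ?thesis using r0 \<sigma> by (simp add: power2_le_iff_abs_le)
  qed
  ultimately show "0 < psi2 s \<and> psi2 s \<le> 1" using p by simp
  have prod1: "(\<sigma> - r) * (\<sigma> + r) = 1" using r2 by (simp add: algebra_simps power2_eq_square)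
  then have inv: "inverse (\<sigma> - r) = \<sigma> + r" by (simp add: inverse_unique)
  have "psi2 s \<noteq> 0" using \<open>r < \<sigma>\<close> p by simp
  then show "phi_m2 (psi2 s) = ereal s"
    using inv p by (simp add: phi_m2_def \<sigma>_def)
qed

definition dens2 :: "real \<Rightarrow> ennreal" where
  "dens2 v = (\<Sum>k. ennreal (cb (Suc k) * erlang_density (2 * k) 1 v))"

lemma dens2_measurable [measurable]: "dens2 \<in> borel_measurable borel"
  unfolding dens2_def by measurable

lemma erlang_exp:
  assumes "0 \<le> s"
  shows "erlang_density k 1 v * exp (- s * v) = (1 / (s + 1)) ^ Suc k * erlang_density k (s + 1) v"
proof (cases "v < 0")
  case True then show ?thesis by (simp add: erlang_density_def)
next
  case False
  have e: "exp (- v) * exp (- s * v) = exp (- (s + 1) * v)" by (simp add: exp_add[symmetric] algebra_simps)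
  have c: "(1 / (s + 1)) ^ Suc k * (s + 1) ^ Suc k = 1"
    using assms by (simp add: power_mult_distrib[symmetric])
  have "erlang_density k 1 v * exp (- s * v) = (v ^ k / fact k) * (exp (- v) * exp (- s * v))"
    using False by (simp add: erlang_density_def)
  also have "\<dots> = ((1 / (s + 1)) ^ Suc k * (s + 1) ^ Suc k) * (v ^ k / fact k) * exp (- (s + 1) * v)"
    unfolding e c by simp
  also have "\<dots> = (1 / (s + 1)) ^ Suc k * erlang_density k (s + 1) v"
    using False by (simp add: erlang_density_def)
  finally show ?thesis .
qed

lemma lap2:
  assumes s: "0 \<le> s"
  shows "(\<integral>\<^sup>+v. ennreal (exp (- s * v)) \<partial>density lborel dens2) = ennreal (psi2 s)"
proof -
  have "(\<integral>\<^sup>+v. ennreal (exp (- s * v)) \<partial>density lborel dens2)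
      = (\<integral>\<^sup>+v. dens2 v * ennreal (exp (- s * v)) \<partial>lborel)"
    by (rule nn_integral_density) auto
  also have "\<dots> = (\<integral>\<^sup>+v. (\<Sum>k. ennreal (cb (Suc k) * erlang_density (2 * k) 1 v * exp (- s * v))) \<partial>lborel)"
  proof (intro nn_integral_cong)
    fix v :: real
    have "dens2 v * ennreal (exp (- s * v)) = (\<Sum>k. ennreal (cb (Suc k) * erlang_density (2 * k) 1 v) * ennreal (exp (- s * v)))"
      unfolding dens2_def by (rule ennreal_suminf_multc[symmetric])
    also have "\<dots> = (\<Sum>k. ennreal (cb (Suc k) * erlang_density (2 * k) 1 v * exp (- s * v)))"
      by (intro suminf_cong ennreal_mult[symmetric]) (auto simp: cb_nonneg)
    finally show "dens2 v * ennreal (exp (- s * v)) = (\<Sum>k. ennreal (cb (Suc k) * erlang_density (2 * k) 1 v * exp (- s * v)))" .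
  qed
  also have "\<dots> = (\<Sum>k. \<integral>\<^sup>+v. ennreal (cb (Suc k) * erlang_density (2 * k) 1 v * exp (- s * v)) \<partial>lborel)"
    by (rule nn_integral_suminf) measurable
  also have "\<dots> = (\<Sum>k. ennreal (cb (Suc k) * (1 / (s + 1)) ^ (2 * k + 1)))"
  proof (intro suminf_cong)
    fix k
    have "(\<integral>\<^sup>+v. ennreal (cb (Suc k) * erlang_density (2 * k) 1 v * exp (- s * v)) \<partial>lborel)
        = (\<integral>\<^sup>+v. ennreal (cb (Suc k) * (1 / (s + 1)) ^ (2 * k + 1)) * ennreal (erlang_density (2 * k) (s + 1) v) \<partial>lborel)"
    proof (intro nn_integral_cong)
      fix v :: real
      have "cb (Suc k) * erlang_density (2 * k) 1 v * exp (- s * v)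
          = (cb (Suc k) * (1 / (s + 1)) ^ (2 * k + 1)) * erlang_density (2 * k) (s + 1) v"
        using erlang_exp[OF s, of "2 * k" v] by (simp add: mult.assoc)
      also have "ennreal \<dots> = ennreal (cb (Suc k) * (1 / (s + 1)) ^ (2 * k + 1)) * ennreal (erlang_density (2 * k) (s + 1) v)"
        using s by (intro ennreal_mult) (auto simp: cb_nonneg)
      finally show "ennreal (cb (Suc k) * erlang_density (2 * k) 1 v * exp (- s * v)) =
          ennreal (cb (Suc k) * (1 / (s + 1)) ^ (2 * k + 1)) * ennreal (erlang_density (2 * k) (s + 1) v)" .
    qed
    also have "\<dots> = ennreal (cb (Suc k) * (1 / (s + 1)) ^ (2 * k + 1)) * (\<integral>\<^sup>+v. ennreal (erlang_density (2 * k) (s + 1) v) \<partial>lborel)"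
      by (rule nn_integral_cmult) measurable
    also have "(\<integral>\<^sup>+v. ennreal (erlang_density (2 * k) (s + 1) v) \<partial>lborel) = 1"
      using nn_integral_erlang_ith_moment[of "s + 1" "2 * k" 0] s by simp
    finally show "(\<integral>\<^sup>+v. ennreal (cb (Suc k) * erlang_density (2 * k) 1 v * exp (- s * v)) \<partial>lborel)
        = ennreal (cb (Suc k) * (1 / (s + 1)) ^ (2 * k + 1))" by simp
  qed
  also have "\<dots> = ennreal (psi2 s)"
    using psi2_series[OF s] s
    by (subst suminf_ennreal2) (auto simp: cb_nonneg sums_iff)
  finally show ?thesis .
qed

lemma copula_m2: "is_copula (arch_C phi_m2 :: real^'n::finite \<Rightarrow> real)"
proof (rule copula_frailty[where psi = psi2 and \<Omega> = "density lborel dens2" and V = "\<lambda>v. v"])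
  show "prob_space (density lborel dens2)"
  proof
    have "emeasure (density lborel dens2) (space (density lborel dens2))
        = (\<integral>\<^sup>+v. ennreal (exp (- 0 * v)) \<partial>density lborel dens2)"
      by (simp add: emeasure_density nn_integral_density)
    also have "\<dots> = ennreal (psi2 0)" by (rule lap2) simp
    also have "psi2 0 = 1" by (simp add: psi2_def)
    finally show "emeasure (density lborel dens2) (space (density lborel dens2)) = 1" by simp
  qed
  show "AE v in density lborel dens2. 0 < v"
  proof (subst AE_density)
    show "dens2 \<in> borel_measurable lborel" by simp
    show "AE v in lborel. 0 < dens2 v \<longrightarrow> 0 < v"
      using AE_lborel_singleton[of "0::real"]
    proof eventually_elim
      case (elim v)
      show ?case
      proof
        assume "0 < dens2 v"
        moreover have "v < 0 \<Longrightarrow> dens2 v = 0" by (simp add: dens2_def erlang_density_def)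
        ultimately show "0 < v" using elim by force
      qed
    qed
  qed
  show "(\<integral>\<^sup>+\<omega>. ennreal (exp (- s * \<omega>)) \<partial>density lborel dens2) = ennreal (psi2 s)" if "0 \<le> s" for s
    using lap2[OF that] .
qed (auto simp: phi_m2_props psi2_props)


no_notation vec_nth (infixl \<open>$\<close> 90)
notation fps_nth (infixl \<open>$\<close> 75)


lemma fps_power_nth_below:
  fixes f :: "'a::comm_ring_1 fps"
  assumes "f $ 0 = 0"
  shows "j < m \<Longrightarrow> (f ^ m) $ j = 0"
proof (induction m arbitrary: j)
  case 0
  then show ?case by simp
next
  case (Suc m)
  have "(f ^ Suc m) $ j = (\<Sum>i=0..j. f $ i * (f ^ m) $ (j - i))"
    by (simp add: fps_mult_nth)
  also have "\<dots> = 0"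
  proof (intro sum.neutral ballI)
    fix i assume "i \<in> {0..j}"
    then show "f $ i * (f ^ m) $ (j - i) = 0"
      using assms Suc by (cases "i = 0") auto
  qed
  finally show ?case .
qed

lemma finite_diff_zero:
  assumes "k < n"
  shows "(\<Sum>i\<le>n. (-1)^(n-i) * real (n choose i) * real i ^ k) = 0"
proof -
  define F :: "real fps" where "F = fps_exp 1 - 1"
  have F0: "F $ 0 = 0" by (simp add: F_def)
  have "(F ^ n) $ k = 0" by (rule fps_power_nth_below[OF F0 assms])
  moreover have "F ^ n = (\<Sum>i\<le>n. of_nat (n choose i) * fps_exp 1 ^ i * (-1)^(n-i))"
  proof -
    have "F = fps_exp 1 + (-1)" by (simp add: F_def)
    then show ?thesis by (simp only: binomial_ring)
  qed
  moreover have "(of_nat (n choose i) * fps_exp 1 ^ i * (-1)^(n-i) :: real fps) $ k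
      = (-1)^(n-i) * real (n choose i) * real i ^ k / fact k" for i
  proof -
    have e1: "(fps_exp (1::real))^i = fps_exp (real i)" by (simp add: fps_exp_power_mult)
    have e2: "(-1::real fps)^(n-i) = fps_const ((-1)^(n-i))"
      by (metis fps_const_1_eq_1 fps_const_neg fps_const_power)
    have e3: "(of_nat (n choose i) :: real fps) = fps_const (real (n choose i))" by (simp add: fps_of_nat)
    have "(of_nat (n choose i) * fps_exp 1 ^ i * (-1)^(n-i) :: real fps) $ k
        = (fps_const (real (n choose i)) * fps_exp (real i) * fps_const ((-1)^(n-i))) $ k"
      by (simp only: e1 e2 e3)
    also have "\<dots> = real (n choose i) * (fps_exp (real i) $ k) * (-1)^(n-i)"
      by (simp only: fps_mult_right_const_nth fps_mult_left_const_nth)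
    also have "\<dots> = (-1)^(n-i) * real (n choose i) * real i ^ k / fact k"
      by (simp only: fps_exp_nth) (simp add: of_nat_fact)
    finally show ?thesis .
  qed
  ultimately have "(\<Sum>i\<le>n. (-1)^(n-i) * real (n choose i) * real i ^ k / fact k) = 0"
    by (simp add: fps_sum_nth)
  then show ?thesis by (simp add: sum_divide_distrib[symmetric])
qed

definition acoef :: "nat \<Rightarrow> real" where
  "acoef n = (if n = 0 then 0 else real n ^ (n - 1) / fact n)"

lemma acoef_nonneg: "0 \<le> acoef n"
  by (simp add: acoef_def)

lemma D_identity:
  "(\<Sum>i=0..n. acoef i * (- real i) ^ (n - i) / fact (n - i)) = (if n = 1 then 1 else 0)"
proof (cases "n \<ge> 2")
  case False
  then have "n = 0 \<or> n = 1" by auto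
  then show ?thesis by (auto simp: acoef_def)
next
  case True
  have trm: "acoef i * (- real i) ^ (n - i) / fact (n - i)
       = (-1)^(n-i) * real (n choose i) * real i ^ (n - 1) / fact n" if "i \<in> {0..n}" for i
  proof (cases "i = 0")
    case True
    then show ?thesis using \<open>n \<ge> 2\<close> by (simp add: acoef_def)
  next
    case False
    have i: "1 \<le> i" "i \<le> n" using False that by auto
    have pw: "real i ^ (i - 1) * real i ^ (n - i) = real i ^ (n - 1)"
      using i by (simp add: power_add[symmetric])
    have bf: "real (n choose i) = fact n / (fact i * fact (n - i))"
      using binomial_fact[OF i(2)] by simp
    have g1: "a / b * (c * d) / e = c * (a * d) / (b * e)" for a b c d e :: real
      by (simp add: field_simps)
    have g2: "c * (f / (b * e)) * p / f = c * p / (b * e)" if "f \<noteq> 0" for c f b e p :: real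
      using that by (simp add: field_simps)
    have mi: "(- real i) ^ (n - i) = (-1)^(n-i) * real i ^ (n - i)" by (rule power_minus)
    have "acoef i * (- real i) ^ (n - i) / fact (n - i)
        = real i ^ (i - 1) / fact i * ((-1)^(n-i) * real i ^ (n - i)) / fact (n - i)"
      using False by (simp only: acoef_def mi if_False)
    also have "\<dots> = (-1)^(n-i) * (real i ^ (i - 1) * real i ^ (n - i)) / (fact i * fact (n - i))"
      by (rule g1)
    also have "\<dots> = (-1)^(n-i) * real i ^ (n - 1) / (fact i * fact (n - i))"
      by (simp only: pw)
    also have "\<dots> = (-1)^(n-i) * real (n choose i) * real i ^ (n - 1) / fact n"
      unfolding bf by (rule g2[symmetric]) simp
    finally show ?thesis .
  qed
  have "(\<Sum>i=0..n. acoef i * (- real i) ^ (n - i) / fact (n - i))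
      = (\<Sum>i=0..n. (-1)^(n-i) * real (n choose i) * real i ^ (n - 1) / fact n)"
    using trm by (rule sum.cong[OF refl])
  also have "\<dots> = (\<Sum>i\<le>n. (-1)^(n-i) * real (n choose i) * real i ^ (n - 1)) / fact n"
    by (simp add: sum_divide_distrib atMost_atLeast0)
  also have "\<dots> = 0" using finite_diff_zero[of "n - 1" n] True by simp
  finally show ?thesis using True by simp
qed

definition Afps :: "complex fps" where
  "Afps = Abs_fps (\<lambda>n. complex_of_real (acoef n))"

lemma Afps_compose: "Afps oo (fps_X * fps_exp (-1)) = fps_X"
proof (rule fps_ext)
  fix n
  have "(Afps oo (fps_X * fps_exp (-1))) $ n = (\<Sum>i=0..n. Afps $ i * ((fps_X * fps_exp (-1)) ^ i $ n))"
    by (rule fps_compose_nth)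
  also have "\<dots> = (\<Sum>i=0..n. complex_of_real (acoef i * (- real i) ^ (n - i) / fact (n - i)))"
  proof (intro sum.cong refl)
    fix i assume "i \<in> {0..n}"
    then have "i \<le> n" by simp
    have "(fps_X * fps_exp (-1)) ^ i = (fps_X ^ i * fps_exp (of_nat i * (-1)) :: complex fps)"
      by (simp add: power_mult_distrib fps_exp_power_mult)
    then have "((fps_X * fps_exp (-1)) ^ i :: complex fps) $ n = (- of_nat i) ^ (n - i) / fact (n - i)"
      using \<open>i \<le> n\<close> by (simp add: fps_X_power_mult_nth)
    then show "Afps $ i * ((fps_X * fps_exp (-1)) ^ i $ n) = complex_of_real (acoef i * (- real i) ^ (n - i) / fact (n - i))"
      by (simp add: Afps_def)
  qed
  also have "\<dots> = complex_of_real (\<Sum>i=0..n. acoef i * (- real i) ^ (n - i) / fact (n - i))"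
    by simp
  also have "\<dots> = fps_X $ n" by (simp add: D_identity)
  finally show "(Afps oo (fps_X * fps_exp (-1))) $ n = fps_X $ n" .
qed



lemma ln_less_minus_one_strict:
  fixes x :: real
  assumes "0 < x" "x \<noteq> 1"
  shows "ln x < x - 1"
proof -
  have s: "0 < sqrt x" using assms by simp
  have "ln x = 2 * ln (sqrt x)" using assms by (simp add: ln_sqrt)
  also have "\<dots> \<le> 2 * (sqrt x - 1)" using ln_le_minus_one[OF s] by simp
  also have "\<dots> < x - 1"
  proof -
    have "sqrt x \<noteq> 1" using assms by simp
    then have "0 < (sqrt x - 1)^2" by simp
    also have "(sqrt x - 1)^2 = x - 2 * sqrt x + 1"
      using assms by (simp add: power2_eq_square algebra_simps)
    finally show ?thesis by simp
  qed
  finally show ?thesis .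
qed

lemma texp_lt: "0 \<le> (t::real) \<Longrightarrow> t < 1 \<Longrightarrow> t * exp (- t) < exp (- 1)"
proof -
  assume t: "0 \<le> t" "t < 1"
  show ?thesis
  proof (cases "t = 0")
    case True then show ?thesis by simp
  next
    case False
    then have "ln t < t - 1" using t by (intro ln_less_minus_one_strict) auto
    then have "exp (ln t) < exp (t - 1)" by simp
    then have "t < exp (t - 1)" using t False by simp
    then have "t * exp (- t) < exp (t - 1) * exp (- t)" by simp
    also have "exp (t - 1) * exp (- t) = exp (- 1)" by (simp add: exp_add[symmetric])
    finally show ?thesis .
  qed
qed

lemma pow_fact_le_exp: "0 \<le> x \<Longrightarrow> x ^ n / fact n \<le> exp (x::real)"
proof -
  assume x: "0 \<le> x"
  have sm: "(\<lambda>k. x^k /\<^sub>R fact k) sums exp x" by (rule exp_converges)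
  have "sum (\<lambda>k. x^k /\<^sub>R fact k) {n} \<le> suminf (\<lambda>k. x^k /\<^sub>R fact k)"
    by (rule sum_le_suminf) (use sm x in \<open>auto simp: sums_iff\<close>)
  then show ?thesis using sm by (simp add: sums_iff divide_inverse mult.commute)
qed

lemma acoef_le: "acoef n \<le> exp 1 ^ n"
proof (cases "n = 0")
  case True then show ?thesis by (simp add: acoef_def)
next
  case False
  have "real n ^ (n - 1) \<le> real n ^ n"
    using False by (intro power_increasing) auto
  then have "acoef n \<le> real n ^ n / fact n" using False
    by (simp add: acoef_def divide_right_mono)
  also have "\<dots> \<le> exp (real n)" by (rule pow_fact_le_exp) simp
  also have "\<dots> = exp 1 ^ n" by (simp add: exp_of_nat_mult[symmetric])
  finally show ?thesis .
qed

lemma acoef_summable: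
  assumes "0 \<le> r" "r < exp (- 1)"
  shows "summable (\<lambda>n. acoef n * r ^ n)"
proof (rule summable_comparison_test')
  have "exp 1 * r < exp 1 * exp (-1)" using assms by simp
  then have er: "exp 1 * r < 1" by (simp add: exp_add[symmetric])
  show "summable (\<lambda>n. (exp 1 * r) ^ n)"
    by (rule summable_geometric) (use er assms in simp)
  show "norm (acoef n * r ^ n) \<le> (exp 1 * r) ^ n" for n
    using acoef_le[of n] assms acoef_nonneg[of n]
    by (simp add: abs_mult power_mult_distrib mult_right_mono)
qed

lemma Afps_radius: "ereal (exp (- 1)) \<le> fps_conv_radius Afps"
  unfolding fps_conv_radius_def
proof (rule conv_radius_geI_ex')
  fix r :: real assume r: "0 < r" "ereal r < ereal (exp (- 1))"
  have "summable (\<lambda>n. acoef n * r ^ n)" using acoef_summable[of r] r by simp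
  then have "summable (\<lambda>n. complex_of_real (acoef n * r ^ n))" by (rule summable_of_real)
  then show "summable (\<lambda>n. fps_nth Afps n * complex_of_real r ^ n)"
    by (simp add: Afps_def)
qed

lemma T_near0:
  obtains U where "open U" "0 \<in> U" "\<And>z. z \<in> U \<Longrightarrow> eval_fps Afps (z * exp (- z)) = z"
proof -
  have rad: "0 < fps_conv_radius Afps"
    using Afps_radius by (rule less_le_trans[rotated]) simp
  have h1: "eval_fps Afps has_fps_expansion Afps"
    by (rule eval_fps_has_fps_expansion[OF rad])
  have h2: "(\<lambda>z::complex. z * exp (- z)) has_fps_expansion fps_X * fps_exp (-1)"
    by (rule has_fps_expansion_mult[OF has_fps_expansion_fps_X has_fps_expansion_exp_neg1])
  have "(eval_fps Afps \<circ> (\<lambda>z::complex. z * exp (- z))) has_fps_expansion (Afps oo (fps_X * fps_exp (-1)))"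
    by (rule has_fps_expansion_compose[OF h1 h2]) simp
  then have "(eval_fps Afps \<circ> (\<lambda>z::complex. z * exp (- z))) has_fps_expansion fps_X"
    by (simp only: Afps_compose)
  then have "eventually (\<lambda>z. eval_fps fps_X z = eval_fps Afps (z * exp (- z))) (nhds 0)"
    by (simp add: has_fps_expansion_def)
  then obtain U where "open U" "0 \<in> U" "\<forall>z\<in>U. eval_fps fps_X z = eval_fps Afps (z * exp (- z))"
    by (auto simp: eventually_nhds)
  then show ?thesis using that by auto
qed

lemma T_identity:
  assumes x: "0 \<le> x" "x < 1"
  shows "eval_fps Afps (complex_of_real (x * exp (- x))) = complex_of_real x"
proof -
  define S0 where "S0 = {z::complex. norm (z * exp (- z)) < exp (- 1)}"
  define S where "S = connected_component_set S0 0"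
  have openS0: "open S0" unfolding S0_def
    by (rule open_Collect_less) (intro continuous_intros)+
  have openS: "open S" unfolding S_def by (rule open_connected_component[OF openS0])
  have connS: "connected S" unfolding S_def by simp
  have z0: "0 \<in> S0" by (simp add: S0_def)
  have zS: "0 \<in> S" unfolding S_def using z0 by (simp add: connected_component_refl)
  have SS0: "S \<subseteq> S0" unfolding S_def by (rule connected_component_subset)
  have seg: "closed_segment 0 (complex_of_real x) \<subseteq> S0"
  proof
    fix z assume "z \<in> closed_segment 0 (complex_of_real x)"
    then obtain t where t: "0 \<le> t" "t \<le> 1" "z = (1 - t) *\<^sub>R 0 + t *\<^sub>R complex_of_real x"
      unfolding in_segment(1) by blast
    then have zt: "z = complex_of_real (t * x)" by (simp add: scaleR_conv_of_real)
    have tx0: "0 \<le> t * x" using t x by simp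
    have "t * x \<le> x" using t x by (simp add: mult_left_le_one_le)
    then have tx1: "t * x < 1" using x by linarith
    have "z * exp (- z) = complex_of_real (t * x * exp (- (t * x)))"
      unfolding zt by (simp only: exp_of_real[symmetric] of_real_minus of_real_mult)
    then have "norm (z * exp (- z)) = t * x * exp (- (t * x))"
      using tx0 by (simp only: norm_of_real) simp
    then show "z \<in> S0" using texp_lt[OF tx0 tx1] by (simp add: S0_def)
  qed
  have xS: "complex_of_real x \<in> S"
  proof -
    have "closed_segment 0 (complex_of_real x) \<subseteq> S" unfolding S_def
      by (rule connected_component_maximal) (use seg in auto)
    then show ?thesis by auto
  qed
  obtain U where U: "open U" "0 \<in> U" "\<And>z. z \<in> U \<Longrightarrow> eval_fps Afps (z * exp (- z)) = z"
    using T_near0 by blast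
  have holo: "(\<lambda>z. eval_fps Afps (z * exp (- z))) holomorphic_on S"
  proof -
    have "(eval_fps Afps \<circ> (\<lambda>z. z * exp (- z))) holomorphic_on S"
    proof (rule holomorphic_on_compose_gen)
      show "(\<lambda>z::complex. z * exp (- z)) holomorphic_on S" by (intro holomorphic_intros)
      show "eval_fps Afps holomorphic_on eball 0 (fps_conv_radius Afps)"
        by (rule holomorphic_on_eval_fps) simp
      show "(\<lambda>z. z * exp (- z)) ` S \<subseteq> eball 0 (fps_conv_radius Afps)"
      proof
        fix w assume "w \<in> (\<lambda>z. z * exp (- z)) ` S"
        then obtain z where "z \<in> S" "w = z * exp (- z)" by auto
        then have "norm w < exp (- 1)" using SS0 by (auto simp: S0_def)
        then have "ereal (norm w) < ereal (exp (- 1))" by simp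
        then have "ereal (norm w) < fps_conv_radius Afps"
          using Afps_radius by (rule less_le_trans)
        then show "w \<in> eball 0 (fps_conv_radius Afps)" by simp
      qed
    qed
    then show ?thesis by (simp add: o_def)
  qed
  have "eval_fps Afps (complex_of_real x * exp (- complex_of_real x)) = complex_of_real x"
  proof (rule analytic_continuation_open[where s = "U \<inter> S" and s' = S])
    show "open (U \<inter> S)" using U openS by auto
    show "open S" by (rule openS)
    show "U \<inter> S \<noteq> {}" using U zS by auto
    show "connected S" by (rule connS)
    show "U \<inter> S \<subseteq> S" by auto
    show "(\<lambda>z. eval_fps Afps (z * exp (- z))) holomorphic_on S" by (rule holo)
    show "(\<lambda>z. z) holomorphic_on S" by (intro holomorphic_intros)
    show "\<And>z. z \<in> U \<inter> S \<Longrightarrow> eval_fps Afps (z * exp (- z)) = z" using U by auto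
    show "complex_of_real x \<in> S" by (rule xS)
  qed
  then show ?thesis by (simp add: exp_of_real[symmetric])
qed

lemma lambert_sums_lt1:
  assumes x: "0 \<le> x" "x < 1"
  shows "(\<lambda>n. acoef n * (x * exp (- x)) ^ n) sums x"
proof -
  define w where "w = x * exp (- x)"
  have w: "0 \<le> w" "w < exp (- 1)" using texp_lt[OF x] x by (auto simp: w_def)
  have rs: "(\<lambda>n. acoef n * w ^ n) sums (suminf (\<lambda>n. acoef n * w ^ n))"
    using acoef_summable[OF w] by (simp add: summable_sums)
  then have "(\<lambda>n. complex_of_real (acoef n * w ^ n)) sums complex_of_real (suminf (\<lambda>n. acoef n * w ^ n))"
    by (simp only: sums_of_real_iff)
  then have "(\<lambda>n. fps_nth Afps n * complex_of_real w ^ n) sums complex_of_real (suminf (\<lambda>n. acoef n * w ^ n))"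
    by (simp add: Afps_def)
  then have "eval_fps Afps (complex_of_real w) = complex_of_real (suminf (\<lambda>n. acoef n * w ^ n))"
    by (simp add: eval_fps_def sums_iff)
  then have "suminf (\<lambda>n. acoef n * w ^ n) = x"
    using T_identity[OF x] by (simp add: w_def)
  then show ?thesis using rs by (simp add: w_def)
qed



lemma lambert_sums_1: "(\<lambda>n. acoef n * exp (- 1) ^ n) sums 1"
proof (rule series_boundary[where h = "\<lambda>t. t * exp (1 - t)" and g = "\<lambda>t. t"])
  show "0 \<le> acoef n * exp (- 1) ^ n" for n by (simp add: acoef_nonneg)
  show "0 \<le> t * exp (1 - t) \<and> t * exp (1 - t) \<le> 1" if "0 < t" "t < 1" for t :: real
  proof -
    have "t * exp (- t) < exp (- 1)" using texp_lt[of t] that by simp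
    then have h1: "t * exp (- t) * exp 1 < exp (- 1) * exp 1" by simp
    have h2: "t * exp (- t) * exp 1 = t * exp (1 - t)" by (simp add: exp_diff exp_minus field_simps)
    have h3: "exp (- 1) * exp 1 = (1::real)" by (simp add: exp_add[symmetric])
    have "t * exp (1 - t) < 1" using h1 unfolding h2 h3 .
    then show ?thesis using that by simp
  qed
  show "((\<lambda>t. t * exp (1 - t)) \<longlongrightarrow> 1) (at_left (1::real))"
  proof -
    have "((\<lambda>t. t * exp (1 - t)) \<longlongrightarrow> 1 * exp (1 - 1)) (at_left (1::real))"
      by (intro tendsto_intros)
    then show ?thesis by simp
  qed
  show "(\<lambda>n. acoef n * exp (- 1) ^ n * (t * exp (1 - t)) ^ n) sums t" if "0 < t" "t < 1" for t :: real
  proof -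
    have pn: "acoef n * exp (- 1) ^ n * (t * exp (1 - t)) ^ n = acoef n * (t * exp (- t)) ^ n" for n
    proof -
      have "exp (- 1) * (t * exp (1 - t)) = t * exp (- t)"
        by (simp add: exp_diff exp_minus field_simps)
      then have "exp (- 1) ^ n * (t * exp (1 - t)) ^ n = (t * exp (- t)) ^ n"
        by (metis power_mult_distrib)
      then show ?thesis by (simp add: mult.assoc)
    qed
    have "(\<lambda>n. acoef n * exp (- 1) ^ n * (t * exp (1 - t)) ^ n) = (\<lambda>n. acoef n * (t * exp (- t)) ^ n)"
      using pn by (rule ext)
    then show ?thesis using lambert_sums_lt1[of t] that by simp
  qed
qed (intro tendsto_ident_at)

lemma lambert_sums:
  assumes "0 \<le> x" "x \<le> 1"
  shows "(\<lambda>n. acoef n * (x * exp (- x)) ^ n) sums x"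
  using lambert_sums_lt1[of x] lambert_sums_1 assms by (cases "x = 1") auto

lemma phi_m1_props:
  shows "phi_m1 0 = \<infinity>" "phi_m1 1 = 0"
    "\<And>u. 0 < u \<Longrightarrow> u \<le> 1 \<Longrightarrow> 0 \<le> phi_m1 u \<and> phi_m1 u \<noteq> \<infinity>"
    "\<And>u v. 0 \<le> u \<Longrightarrow> u < v \<Longrightarrow> v \<le> 1 \<Longrightarrow> phi_m1 v < phi_m1 u"
proof -
  show "phi_m1 0 = \<infinity>" "phi_m1 1 = 0" by (simp_all add: phi_m1_def)
  show "0 \<le> phi_m1 u \<and> phi_m1 u \<noteq> \<infinity>" if "0 < u" "u \<le> 1" for u
    using ln_le_minus_one[of u] that by (simp add: phi_m1_def)
  show "phi_m1 v < phi_m1 u" if "0 \<le> u" "u < v" "v \<le> 1" for u v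
  proof (cases "u = 0")
    case True
    then show ?thesis using that by (simp add: phi_m1_def)
  next
    case False
    then have u: "0 < u" using that by simp
    have v: "0 < v" using u that by simp
    have "ln (u / v) < u / v - 1" using u v that by (intro ln_less_minus_one_strict) auto
    then have "ln u - ln v < u / v - 1" using u v by (simp add: ln_div)
    moreover have "u / v - 1 = (u - v) / v" using v by (simp add: field_simps)
    moreover have "(u - v) / v \<le> u - v"
    proof -
      have "1 \<le> 1 / v" using v that by (simp add: field_simps)
      moreover have "u - v \<le> 0" using that by simp
      ultimately have "(u - v) * (1 / v) \<le> (u - v) * 1" by (rule mult_left_mono_neg)
      then have "(u - v) * 1 \<ge> (u - v) * (1 / v)" by simp
      then show ?thesis by simp
    qed
    ultimately have "ln u - ln v < u - v" by linarith
    then have lt: "v - 1 - ln v < u - 1 - ln u" by linarith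
    have pv: "phi_m1 v = ereal (v - 1 - ln v)" using v by (simp add: phi_m1_def)
    have pu: "phi_m1 u = ereal (u - 1 - ln u)" using u by (simp add: phi_m1_def)
    show ?thesis unfolding pv pu using lt by simp
  qed
qed

definition psi1 :: "real \<Rightarrow> real" where
  "psi1 s = (\<Sum>n. acoef n * exp (- (s + 1)) ^ n)"

lemma psi1_props:
  assumes s: "0 \<le> s"
  shows "0 < psi1 s \<and> psi1 s \<le> 1" "phi_m1 (psi1 s) = ereal s"
    "(\<lambda>n. acoef n * exp (- (s + 1)) ^ n) sums psi1 s"
proof -
  define f where "f x = x - 1 - ln x" for x :: real
  define a where "a = exp (- (s + 1))"
  have a: "0 < a" "a \<le> 1" using s by (auto simp: a_def)
  have fa: "f a = s + a" by (simp add: f_def a_def)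
  have "\<exists>x. a \<le> x \<and> x \<le> 1 \<and> f x = s"
  proof (rule IVT2)
    show "f 1 \<le> s" using s by (simp add: f_def)
    show "s \<le> f a" using fa a by simp
    show "a \<le> 1" by (rule a)
    show "\<forall>x. a \<le> x \<and> x \<le> 1 \<longrightarrow> isCont f x"
      using a unfolding f_def by (auto intro!: continuous_intros)
  qed
  then obtain x where x: "a \<le> x" "x \<le> 1" "f x = s" by blast
  have x0: "0 < x" using x a by simp
  have "exp (- (s + 1)) = x * exp (- x)"
  proof -
    have "- (s + 1) = ln x + (- x)" using x(3) by (simp add: f_def)
    then have "exp (- (s + 1)) = exp (ln x + (- x))" by simp
    also have "\<dots> = exp (ln x) * exp (- x)" by (rule exp_add)
    finally have "exp (- (s + 1)) = exp (ln x) * exp (- x)" .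
    then show ?thesis using x0 by simp
  qed
  then have sm: "(\<lambda>n. acoef n * exp (- (s + 1)) ^ n) sums x"
    using lambert_sums[of x] x0 x by simp
  then have px: "psi1 s = x" by (simp add: psi1_def sums_iff)
  show "(\<lambda>n. acoef n * exp (- (s + 1)) ^ n) sums psi1 s" using sm px by simp
  show "0 < psi1 s \<and> psi1 s \<le> 1" using px x0 x by simp
  show "phi_m1 (psi1 s) = ereal s" using px x0 x(3) by (simp add: phi_m1_def f_def)
qed

definition pw :: "nat \<Rightarrow> real" where
  "pw n = acoef n * exp (- 1) ^ n"

definition P1 :: "nat pmf" where
  "P1 = embed_pmf pw"

lemma pw_nonneg: "0 \<le> pw n" by (simp add: pw_def acoef_nonneg)

lemma pw_int: "(\<integral>\<^sup>+n. ennreal (pw n) \<partial>count_space UNIV) = 1"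
proof -
  have "(\<integral>\<^sup>+n. ennreal (pw n) \<partial>count_space UNIV) = (\<Sum>n. ennreal (pw n))"
    by (rule nn_integral_count_space_nat)
  also have "\<dots> = ennreal (\<Sum>n. pw n)"
    using lambert_sums_1 by (intro suminf_ennreal2) (auto simp: pw_nonneg pw_def sums_iff acoef_nonneg)
  also have "(\<Sum>n. pw n) = 1" using lambert_sums_1 by (simp add: pw_def sums_iff)
  finally show ?thesis by simp
qed

lemma pmf_P1: "pmf P1 n = pw n"
  unfolding P1_def by (rule pmf_embed_pmf[OF pw_nonneg pw_int])

lemma lap1:
  assumes s: "0 \<le> s"
  shows "(\<integral>\<^sup>+n. ennreal (exp (- s * real n)) \<partial>measure_pmf P1) = ennreal (psi1 s)"
proof -
  have "(\<integral>\<^sup>+n. ennreal (exp (- s * real n)) \<partial>measure_pmf P1)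
      = (\<integral>\<^sup>+n. ennreal (pmf P1 n) * ennreal (exp (- s * real n)) \<partial>count_space UNIV)"
    by (rule nn_integral_measure_pmf)
  also have "\<dots> = (\<Sum>n. ennreal (pmf P1 n) * ennreal (exp (- s * real n)))"
    by (rule nn_integral_count_space_nat)
  also have "\<dots> = (\<Sum>n. ennreal (acoef n * exp (- (s + 1)) ^ n))"
  proof (intro suminf_cong)
    fix n
    have "pw n * exp (- s * real n) = acoef n * exp (- (s + 1)) ^ n"
    proof -
      have "exp (- 1) ^ n * exp (- s * real n) = exp (- (s + 1)) ^ n"
        by (simp add: exp_of_nat_mult[symmetric] exp_add[symmetric] algebra_simps)
      then show ?thesis by (simp add: pw_def mult.assoc)
    qed
    then show "ennreal (pmf P1 n) * ennreal (exp (- s * real n)) = ennreal (acoef n * exp (- (s + 1)) ^ n)"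
      by (simp add: pmf_P1 ennreal_mult[symmetric] pw_nonneg)
  qed
  also have "\<dots> = ennreal (\<Sum>n. acoef n * exp (- (s + 1)) ^ n)"
    using psi1_props(3)[OF s] by (intro suminf_ennreal2) (auto simp: acoef_nonneg sums_iff)
  also have "(\<Sum>n. acoef n * exp (- (s + 1)) ^ n) = psi1 s" by (simp add: psi1_def)
  finally show ?thesis .
qed

lemma copula_m1: "is_copula (arch_C phi_m1 :: real^'n::finite \<Rightarrow> real)"
proof (rule copula_frailty[where psi = psi1 and \<Omega> = "measure_pmf P1" and V = "\<lambda>n. real n"])
  show "prob_space (measure_pmf P1)" by (rule prob_space_measure_pmf)
  show "(\<lambda>n. real n) \<in> borel_measurable (measure_pmf P1)" by simp
  show "AE n in measure_pmf P1. 0 < real n"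
    by (auto simp: AE_measure_pmf_iff set_pmf_iff pmf_P1 pw_def acoef_def split: if_splits)
  show "(\<integral>\<^sup>+\<omega>. ennreal (exp (- s * real \<omega>)) \<partial>measure_pmf P1) = ennreal (psi1 s)" if "0 \<le> s" for s
    using lap1[OF that] .
qed (auto simp: phi_m1_props psi1_props)

theorem theorem7:
  assumes "CARD('n::finite) \<ge> 3"
  shows "is_copula (arch_C phi_m1 :: real^'n \<Rightarrow> real) \<and>
         is_copula (arch_C phi_m2 :: real^'n \<Rightarrow> real)"
  using copula_m1 copula_m2 by blast

end
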